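(* Let $b\in\mathbb{R}\setminus\{0\}$ and let $\nu_1,\nu_2:\mathbb{R}^2\to\mathbb{R}$ be smooth functions of $(j,t)$ with $\nu_2(0,0)=0$ and $$\nu_1(0,0)=0,\qquad \frac{\partial \nu_1}{\partial j}(0,0)=0,\qquad \frac{\partial^2 \nu_1}{\partial j^2}(0,0)\neq 0,\qquad \frac{\partial \nu_1}{\partial t}(0,0)\neq 0.$$ Define $\mathrm{disc}_b(j,t):=\nu_2(j,t)^2-4b\,\nu_1(j,t)$. Then the saddle-node bifurcations associated to $\nu_1$ and $\mathrm{disc}_b$ are concave in the same direction if $$\frac{1}{2b}\,\frac{\left(\frac{\partial \nu_2}{\partial j}(0,0)\right)^2}{\frac{\partial^2 \nu_1}{\partial j^2}(0,0)}<1 .$$ If the inequality is reversed, they are concave in opposite directions. If equality holds, the double flip bifurcation is degenerate, i.e. $\frac{\partial^2 \mathrm{disc}_b}{\partial j^2}(0,0)=0$.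
   Context: For a smooth function $g(j,t)$ with $g(0,0)=0$, $\partial_j g(0,0)=0$, $\partial_j^2 g(0,0)\neq 0$, $\partial_t g(0,0)\neq 0$ (the conditions for the ODE $dj/dt=g(j,t)$ to undergo a saddle-node bifurcation at the origin), the zero set $\{g=0\}$ near the origin is a curve $t=\gamma(j)$ of parabolic shape with $\gamma(0)=\gamma'(0)=0$; the associated saddle-node bifurcation is called concave up if $\partial_j^2 g(0,0)\,\partial_t g(0,0)<0$ and concave down if $\partial_j^2 g(0,0)\,\partial_t g(0,0)>0$. One has $\partial_j \mathrm{disc}_b(0,0)=0$ and $\partial_t\mathrm{disc}_b(0,0)=-4b\,\partial_t\nu_1(0,0)\neq0$, so $\mathrm{disc}_b$ satisfies the saddle-node conditions exactly when $\partial_j^2\mathrm{disc}_b(0,0)=2(\partial_j\nu_2(0,0))^2-4b\,\partial_j^2\nu_1(0,0)\neq0$; the double flip bifurcation (of the Hamiltonian $H_{j,t}(q,p)=\frac{a}{2}p^2+\frac{b}{6}q^6+\frac{\nu_1(j,t)}{2}q^2+\frac{\nu_2(j,t)}{4}q^4$) is called non-degenerate if this quantity is non-zero and degenerate otherwise. *)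

theory Defs
  imports "HOL-Analysis.Analysis"
begin

definition pd_j :: "(real \<times> real \<Rightarrow> real) \<Rightarrow> real \<times> real \<Rightarrow> real" where
  "pd_j f = (\<lambda>(j, t). deriv (\<lambda>s. f (s, t)) j)"

definition pd_t :: "(real \<times> real \<Rightarrow> real) \<Rightarrow> real \<times> real \<Rightarrow> real" where
  "pd_t f = (\<lambda>(j, t). deriv (\<lambda>s. f (j, s)) t)"

fun iter_pd :: "bool list \<Rightarrow> (real \<times> real \<Rightarrow> real) \<Rightarrow> real \<times> real \<Rightarrow> real" where
  "iter_pd [] f = f"
| "iter_pd (d # ds) f = (if d then pd_j else pd_t) (iter_pd ds f)"

definition smooth2 :: "(real \<times> real \<Rightarrow> real) \<Rightarrow> bool" where
  "smooth2 f \<longleftrightarrow> (\<forall>ds. continuous_on UNIV (iter_pd ds f) \<and>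
     (\<forall>j t. (\<lambda>s. iter_pd ds f (s, t)) differentiable (at j) \<and>
            (\<lambda>s. iter_pd ds f (j, s)) differentiable (at t)))"

text \<open>Saddle-node conditions for dj/dt = g(j,t) at the origin.\<close>
definition saddle_node :: "(real \<times> real \<Rightarrow> real) \<Rightarrow> bool" where
  "saddle_node g \<longleftrightarrow> g (0, 0) = 0 \<and> pd_j g (0, 0) = 0 \<and>
     pd_j (pd_j g) (0, 0) \<noteq> 0 \<and> pd_t g (0, 0) \<noteq> 0"

definition concave_up :: "(real \<times> real \<Rightarrow> real) \<Rightarrow> bool" where
  "concave_up g \<longleftrightarrow> saddle_node g \<and> pd_j (pd_j g) (0, 0) * pd_t g (0, 0) < 0"

definition concave_down :: "(real \<times> real \<Rightarrow> real) \<Rightarrow> bool" where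
  "concave_down g \<longleftrightarrow> saddle_node g \<and> pd_j (pd_j g) (0, 0) * pd_t g (0, 0) > 0"

definition disc :: "real \<Rightarrow> (real \<times> real \<Rightarrow> real) \<Rightarrow> (real \<times> real \<Rightarrow> real) \<Rightarrow> real \<times> real \<Rightarrow> real" where
  "disc b \<nu>1 \<nu>2 = (\<lambda>x. (\<nu>2 x)\<^sup>2 - 4 * b * \<nu>1 x)"

definition same_concavity :: "(real \<times> real \<Rightarrow> real) \<Rightarrow> (real \<times> real \<Rightarrow> real) \<Rightarrow> bool" where
  "same_concavity f g \<longleftrightarrow> (concave_up f \<and> concave_up g) \<or> (concave_down f \<and> concave_down g)"

definition opposite_concavity :: "(real \<times> real \<Rightarrow> real) \<Rightarrow> (real \<times> real \<Rightarrow> real) \<Rightarrow> bool" where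
  "opposite_concavity f g \<longleftrightarrow> (concave_up f \<and> concave_down g) \<or> (concave_down f \<and> concave_up g)"

end

theory Submission
  imports Defs
begin

lemma sm_j: assumes "smooth2 f" shows "((\<lambda>s. f (s, t)) has_real_derivative pd_j f (j, t)) (at j)"
proof -
  have "(\<lambda>s. iter_pd [] f (s, t)) differentiable (at j)" using assms unfolding smooth2_def by blast
  then show ?thesis by (simp add: pd_j_def DERIV_deriv_iff_real_differentiable)
qed

lemma sm_t: assumes "smooth2 f" shows "((\<lambda>s. f (j, s)) has_real_derivative pd_t f (j, t)) (at t)"
proof -
  have "(\<lambda>s. iter_pd [] f (j, s)) differentiable (at t)" using assms unfolding smooth2_def by blast
  then show ?thesis by (simp add: pd_t_def DERIV_deriv_iff_real_differentiable)
qed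

lemma sm_jj: assumes "smooth2 f" shows "((\<lambda>s. pd_j f (s, t)) has_real_derivative pd_j (pd_j f) (j, t)) (at j)"
proof -
  have "(\<lambda>s. iter_pd [True] f (s, t)) differentiable (at j)" using assms unfolding smooth2_def by blast
  then have "(\<lambda>s. pd_j f (s, t)) differentiable (at j)" by simp
  then show ?thesis by (simp add: pd_j_def[of "pd_j f"] DERIV_deriv_iff_real_differentiable)
qed

lemma pdj_pt: "pd_j f (j,t) = deriv (\<lambda>s. f (s,t)) j"
  by (simp add: pd_j_def)

lemma pdj_disc:
  assumes "smooth2 A" "smooth2 B"
  shows "pd_j (disc b A B) = (\<lambda>(j,t). 2 * B (j,t) * pd_j B (j,t) - 4 * b * pd_j A (j,t))"
proof (rule ext, clarify)
  fix j t
  have "((\<lambda>s. (B (s,t))\<^sup>2 - 4 * b * A (s,t)) has_real_derivative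
      2 * B (j,t) * pd_j B (j,t) - 4 * b * pd_j A (j,t)) (at j)"
    using sm_j[OF assms(1), of t j] sm_j[OF assms(2), of t j]
    by (auto intro!: derivative_eq_intros)
  then show "pd_j (disc b A B) (j, t) = 2 * B (j,t) * pd_j B (j,t) - 4 * b * pd_j A (j,t)"
    by (simp add: pd_j_def disc_def DERIV_imp_deriv)
qed

lemma pdt_disc:
  assumes "smooth2 A" "smooth2 B"
  shows "pd_t (disc b A B) (j,t) = 2 * B (j,t) * pd_t B (j,t) - 4 * b * pd_t A (j,t)"
proof -
  have "((\<lambda>s. (B (j,s))\<^sup>2 - 4 * b * A (j,s)) has_real_derivative
      2 * B (j,t) * pd_t B (j,t) - 4 * b * pd_t A (j,t)) (at t)"
    using sm_t[OF assms(1), of j t] sm_t[OF assms(2), of j t]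
    by (auto intro!: derivative_eq_intros)
  then show ?thesis
    by (simp add: pd_t_def disc_def DERIV_imp_deriv)
qed

lemma pdjj_disc:
  assumes "smooth2 A" "smooth2 B"
  shows "pd_j (pd_j (disc b A B)) (j,t) = 2 * (pd_j B (j,t))\<^sup>2 + 2 * B (j,t) * pd_j (pd_j B) (j,t) - 4 * b * pd_j (pd_j A) (j,t)"
proof -
  have "((\<lambda>s. 2 * B (s,t) * pd_j B (s,t) - 4 * b * pd_j A (s,t)) has_real_derivative
      2 * (pd_j B (j,t))\<^sup>2 + 2 * B (j,t) * pd_j (pd_j B) (j,t) - 4 * b * pd_j (pd_j A) (j,t)) (at j)"
    using sm_j[OF assms(2), of t j] sm_jj[OF assms(1), of t j] sm_jj[OF assms(2), of t j]
    by (auto intro!: derivative_eq_intros simp: power2_eq_square algebra_simps)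
  then show ?thesis
    by (subst pdj_disc[OF assms], subst pdj_pt) (simp add: DERIV_imp_deriv)
qed

theorem theorem4p2:
  fixes b :: real and \<nu>1 \<nu>2 :: "real \<times> real \<Rightarrow> real"
  assumes "b \<noteq> 0"
    and "smooth2 \<nu>1" and "smooth2 \<nu>2"
    and "\<nu>2 (0, 0) = 0"
    and "\<nu>1 (0, 0) = 0" and "pd_j \<nu>1 (0, 0) = 0"
    and "pd_j (pd_j \<nu>1) (0, 0) \<noteq> 0" and "pd_t \<nu>1 (0, 0) \<noteq> 0"
  shows "(1 / (2 * b) * ((pd_j \<nu>2 (0, 0))\<^sup>2 / pd_j (pd_j \<nu>1) (0, 0)) < 1
            \<longrightarrow> same_concavity \<nu>1 (disc b \<nu>1 \<nu>2))
       \<and> (1 / (2 * b) * ((pd_j \<nu>2 (0, 0))\<^sup>2 / pd_j (pd_j \<nu>1) (0, 0)) > 1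
            \<longrightarrow> opposite_concavity \<nu>1 (disc b \<nu>1 \<nu>2))
       \<and> (1 / (2 * b) * ((pd_j \<nu>2 (0, 0))\<^sup>2 / pd_j (pd_j \<nu>1) (0, 0)) = 1
            \<longrightarrow> pd_j (pd_j (disc b \<nu>1 \<nu>2)) (0, 0) = 0)"
proof -
  define a where "a = pd_j (pd_j \<nu>1) (0, 0)"
  define c where "c = pd_t \<nu>1 (0, 0)"
  define q where "q = pd_j \<nu>2 (0, 0)"
  have a0: "a \<noteq> 0" and c0: "c \<noteq> 0" using assms unfolding a_def c_def by auto
  have D0: "disc b \<nu>1 \<nu>2 (0,0) = 0" using assms by (simp add: disc_def)
  have Dj: "pd_j (disc b \<nu>1 \<nu>2) (0,0) = 0" using assms by (simp add: pdj_disc)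
  have Dt: "pd_t (disc b \<nu>1 \<nu>2) (0,0) = - 4 * b * c"
    using assms by (simp add: pdt_disc c_def)
  have Djj: "pd_j (pd_j (disc b \<nu>1 \<nu>2)) (0,0) = 2 * q\<^sup>2 - 4 * b * a"
    using assms by (simp add: pdjj_disc q_def a_def)
  have ac: "a * c < 0 \<or> a * c > 0" using a0 c0 by (auto simp add: linorder_neq_iff mult_less_0_iff zero_less_mult_iff)
  have sn1: "saddle_node \<nu>1" using assms by (simp add: saddle_node_def)
  have key: "(2 * q\<^sup>2 - 4 * b * a) * (- 4 * b * c) = (16 * b\<^sup>2 * (1 - 1 / (2 * b) * (q\<^sup>2 / a))) * (a * c)"
    using a0 assms(1) by (simp add: field_simps power2_eq_square)
  have bb: "b\<^sup>2 > 0" using assms(1) by simp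
  have r_eq: "1 / (2 * b) * (q\<^sup>2 / a) = 1 \<longleftrightarrow> 2 * q\<^sup>2 - 4 * b * a = 0"
    using a0 assms(1) by (auto simp: field_simps)
  show ?thesis
    unfolding a_def[symmetric] q_def[symmetric]
  proof (intro conjI impI)
    assume h: "1 / (2 * b) * (q\<^sup>2 / a) < 1"
    then have ne: "2 * q\<^sup>2 - 4 * b * a \<noteq> 0" using r_eq by auto
    have sn: "saddle_node (disc b \<nu>1 \<nu>2)" using D0 Dj Dt Djj ne c0 assms(1)
      by (simp add: saddle_node_def)
    have pos: "16 * b\<^sup>2 * (1 - 1 / (2 * b) * (q\<^sup>2 / a)) > 0" using h bb by simp
    have "((2 * q\<^sup>2 - 4 * b * a) * (- 4 * b * c) < 0 \<longleftrightarrow> a * c < 0) \<and> ((2 * q\<^sup>2 - 4 * b * a) * (- 4 * b * c) > 0 \<longleftrightarrow> a * c > 0)" (is ?S)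
      unfolding key using pos by (simp add: mult_less_0_iff zero_less_mult_iff)
    then have S: ?S .
    show "same_concavity \<nu>1 (disc b \<nu>1 \<nu>2)"
      by (simp only: same_concavity_def concave_up_def concave_down_def Dt Djj
        a_def[symmetric] c_def[symmetric]) (use sn sn1 S ac in blast)
  next
    assume h: "1 / (2 * b) * (q\<^sup>2 / a) > 1"
    then have ne: "2 * q\<^sup>2 - 4 * b * a \<noteq> 0" using r_eq by auto
    have sn: "saddle_node (disc b \<nu>1 \<nu>2)" using D0 Dj Dt Djj ne c0 assms(1)
      by (simp add: saddle_node_def)
    have neg: "16 * b\<^sup>2 * (1 - 1 / (2 * b) * (q\<^sup>2 / a)) < 0" using h bb
      by (simp add: mult_pos_neg)
    have "((2 * q\<^sup>2 - 4 * b * a) * (- 4 * b * c) < 0 \<longleftrightarrow> a * c > 0) \<and> ((2 * q\<^sup>2 - 4 * b * a) * (- 4 * b * c) > 0 \<longleftrightarrow> a * c < 0)" (is ?S)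
      unfolding key using neg by (auto simp add: mult_less_0_iff zero_less_mult_iff)
    then have S: ?S .
    show "opposite_concavity \<nu>1 (disc b \<nu>1 \<nu>2)"
      by (simp only: opposite_concavity_def concave_up_def concave_down_def Dt Djj
        a_def[symmetric] c_def[symmetric]) (use sn sn1 S ac in blast)
  next
    assume "1 / (2 * b) * (q\<^sup>2 / a) = 1"
    then show "pd_j (pd_j (disc b \<nu>1 \<nu>2)) (0, 0) = 0" using r_eq Djj by (simp only:)
  qed
qed

end
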